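(* Let two algebraically equivalent models (each one of the linear dynamic models described in the context) be written in stacked form as $$T_1x=v,\qquad T_2y=w,$$ where $x,y$ are zero-mean nonsingular Gaussian sequences over $[0,N]$, the nonsingular matrices $T_1,T_2$ are determined by the model parameters, and $v=[v_0',\ldots,v_N']'$, $w=[w_0',\ldots,w_N']'$ are the vectors of dynamic noise and boundary values with nonsingular covariances $\mathrm{Cov}(v)=P_1$, $\mathrm{Cov}(w)=P_2$. Then the sample paths of $v$ and $w$ are related by $$T_2'P_2^{-1}w=T_1'P_1^{-1}v .$$
   Context: Sequences are indexed by $[0,N]=(0,1,\ldots,N)$, $x_k\in\mathbb{R}^d$, $'$ denotes transpose. The models considered are linear dynamic models of the following types: forward/backward Markov, reciprocal, and forward/backward $CM_L$ and $CM_F$ models; each such model with its boundary condition can be written as $Tx=v$ with $T$ nonsingular and $v$ stacking the zero-mean Gaussian dynamic noise and boundary values. Two models $T_1x=v$, $T_2y=w$ are algebraically equivalent (AE) if $x=y$ (path-wise identical sequences). *)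

theory Defs
  imports "HOL-Probability.Probability"
begin

text \<open>Stacked sequences over [0,N] with values in R^d are represented as vectors
  of type real^'n, where the finite index type 'n stands for the (N+1)d stacked
  coordinates.\<close>

text \<open>Zero-mean nonsingular Gaussian random vector: a random vector every nonzero
  linear functional of which is normally distributed with mean 0 and positive
  standard deviation (Cramer--Wold characterisation).\<close>
definition zm_nonsing_gaussian :: "'a measure \<Rightarrow> ('a \<Rightarrow> real^'n::finite) \<Rightarrow> bool" where
  "zm_nonsing_gaussian M x \<longleftrightarrow>
     x \<in> borel_measurable M \<and>
     (\<forall>c::real^'n. c \<noteq> 0 \<longrightarrow>
        (\<exists>\<sigma>>0. distributed M lborel (\<lambda>\<omega>. c \<bullet> x \<omega>) (normal_density 0 \<sigma>)))"

definition cov_mat :: "'a measure \<Rightarrow> ('a \<Rightarrow> real^'n::finite) \<Rightarrow> real^'n^'n" where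
  "cov_mat M x = (\<chi> i j. integral\<^sup>L M (\<lambda>\<omega>.
      (x \<omega> $ i - integral\<^sup>L M (\<lambda>\<eta>. x \<eta> $ i)) *
      (x \<omega> $ j - integral\<^sup>L M (\<lambda>\<eta>. x \<eta> $ j))))"

end

theory Submission
  imports Defs
begin

lemma gauss_moments:
  assumes P: "prob_space M" and G: "zm_nonsing_gaussian M x"
  shows "integrable M (\<lambda>\<omega>. (c \<bullet> x \<omega>)^2) \<and> integrable M (\<lambda>\<omega>. c \<bullet> x \<omega>)
         \<and> integral\<^sup>L M (\<lambda>\<omega>. c \<bullet> x \<omega>) = 0"
proof (cases "c = 0")
  case True
  then show ?thesis using P by simp
next
  case False
  then obtain \<sigma> where s: "\<sigma> > 0" and D: "distributed M lborel (\<lambda>\<omega>. c \<bullet> x \<omega>) (normal_density 0 \<sigma>)"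
    using G unfolding zm_nonsing_gaussian_def by blast
  have "integrable lborel (\<lambda>t. normal_density 0 \<sigma> t * t^2)"
    using integrable_normal_moment[where \<mu>=0 and \<sigma>=\<sigma> and k=2] s by simp
  then have 1: "integrable M (\<lambda>\<omega>. (c \<bullet> x \<omega>)^2)"
    using distributed_integrable[OF D, of "\<lambda>t. t^2"] by simp
  have "integrable lborel (\<lambda>t. normal_density 0 \<sigma> t * t)"
    using integrable_normal_moment[where \<mu>=0 and \<sigma>=\<sigma> and k=1] s by simp
  then have 2: "integrable M (\<lambda>\<omega>. c \<bullet> x \<omega>)"
    using distributed_integrable[OF D, of "\<lambda>t. t"] by simp
  have 3: "integral\<^sup>L M (\<lambda>\<omega>. c \<bullet> x \<omega>) = 0"
    using prob_space.normal_distributed_expectation[OF P s D] by simp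
  show ?thesis using 1 2 3 by simp
qed

lemma gauss_products:
  fixes x :: "'a \<Rightarrow> real^'n::finite"
  assumes P: "prob_space M" and G: "zm_nonsing_gaussian M x"
  shows "integrable M (\<lambda>\<omega>. x \<omega> $ k * x \<omega> $ l)"
proof -
  define a where "a = (axis k 1 :: real^'n)"
  define b where "b = (axis l 1 :: real^'n)"
  have e: "x \<omega> $ k * x \<omega> $ l = ((((a + b) \<bullet> x \<omega>)^2 - (a \<bullet> x \<omega>)^2 - (b \<bullet> x \<omega>)^2) / 2)" for \<omega>
    unfolding a_def b_def by (simp add: inner_add_left inner_axis' power2_eq_square algebra_simps)
  have "integrable M (\<lambda>\<omega>. ((((a + b) \<bullet> x \<omega>)^2 - (a \<bullet> x \<omega>)^2 - (b \<bullet> x \<omega>)^2) / 2))"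
    using gauss_moments[OF P G, of "a+b"] gauss_moments[OF P G, of a] gauss_moments[OF P G, of b]
    by (intro integrable_divide integrable_diff) auto
  then show ?thesis unfolding e .
qed

lemma gauss_comp:
  fixes x :: "'a \<Rightarrow> real^'n::finite"
  assumes P: "prob_space M" and G: "zm_nonsing_gaussian M x"
  shows "integrable M (\<lambda>\<omega>. x \<omega> $ k) \<and> integral\<^sup>L M (\<lambda>\<omega>. x \<omega> $ k) = 0"
  using gauss_moments[OF P G, of "axis k 1"] by (simp add: inner_axis')

lemma cov_lin:
  fixes x v :: "'a \<Rightarrow> real^'n::finite"
  assumes P: "prob_space M" and G: "zm_nonsing_gaussian M x"
    and T: "\<forall>\<omega>\<in>space M. T *v x \<omega> = v \<omega>"
  shows "cov_mat M v = T ** (\<chi> k l. integral\<^sup>L M (\<lambda>\<omega>. x \<omega> $ k * x \<omega> $ l)) ** transpose T"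
proof -
  have vi: "v \<omega> $ i = (\<Sum>k\<in>UNIV. T $ i $ k * x \<omega> $ k)" if "\<omega> \<in> space M" for \<omega> i
    proof -
    have "v \<omega> = T *v x \<omega>" using T that by simp
    then show ?thesis by (simp add: matrix_vector_mult_def)
  qed
  have m: "integral\<^sup>L M (\<lambda>\<eta>. v \<eta> $ i) = 0" for i
  proof -
    have "integral\<^sup>L M (\<lambda>\<eta>. v \<eta> $ i) = integral\<^sup>L M (\<lambda>\<eta>. \<Sum>k\<in>UNIV. T $ i $ k * x \<eta> $ k)"
      by (rule Bochner_Integration.integral_cong[OF refl]) (auto simp: vi)
    also have "\<dots> = (\<Sum>k\<in>UNIV. T $ i $ k * integral\<^sup>L M (\<lambda>\<eta>. x \<eta> $ k))"
      using gauss_comp[OF P G] by (subst Bochner_Integration.integral_sum) auto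
    also have "\<dots> = 0" using gauss_comp[OF P G] by simp
    finally show ?thesis .
  qed
  have c: "cov_mat M v $ i $ j = (\<Sum>k\<in>UNIV. \<Sum>l\<in>UNIV. T $ i $ k * T $ j $ l * integral\<^sup>L M (\<lambda>\<omega>. x \<omega> $ k * x \<omega> $ l))" for i j
  proof -
    have "cov_mat M v $ i $ j = integral\<^sup>L M (\<lambda>\<omega>. v \<omega> $ i * v \<omega> $ j)"
      unfolding cov_mat_def by (simp add: m)
    also have "\<dots> = integral\<^sup>L M (\<lambda>\<omega>. \<Sum>k\<in>UNIV. \<Sum>l\<in>UNIV. T $ i $ k * T $ j $ l * (x \<omega> $ k * x \<omega> $ l))"
      by (rule Bochner_Integration.integral_cong[OF refl]) (simp add: vi sum_product mult.commute mult.left_commute)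
    also have "\<dots> = (\<Sum>k\<in>UNIV. \<Sum>l\<in>UNIV. T $ i $ k * T $ j $ l * integral\<^sup>L M (\<lambda>\<omega>. x \<omega> $ k * x \<omega> $ l))"
      using gauss_products[OF P G] by (simp add: Bochner_Integration.integral_sum)
    finally show ?thesis .
  qed
  show ?thesis
  proof (subst vec_eq_iff, intro allI, subst vec_eq_iff, intro allI)
    fix i j
    have "(T ** (\<chi> k l. integral\<^sup>L M (\<lambda>\<omega>. x \<omega> $ k * x \<omega> $ l)) ** transpose T) $ i $ j
      = (\<Sum>l\<in>UNIV. (\<Sum>k\<in>UNIV. T $ i $ k * integral\<^sup>L M (\<lambda>\<omega>. x \<omega> $ k * x \<omega> $ l)) * T $ j $ l)"
      by (simp add: matrix_matrix_mult_def transpose_def)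
    also have "\<dots> = (\<Sum>l\<in>UNIV. \<Sum>k\<in>UNIV. T $ i $ k * T $ j $ l * integral\<^sup>L M (\<lambda>\<omega>. x \<omega> $ k * x \<omega> $ l))"
      by (simp add: sum_distrib_left sum_distrib_right mult_ac)
    also have "\<dots> = cov_mat M v $ i $ j"
      unfolding c by (rule sum.swap)
    finally show "cov_mat M v $ i $ j = (T ** (\<chi> k l. integral\<^sup>L M (\<lambda>\<omega>. x \<omega> $ k * x \<omega> $ l)) ** transpose T) $ i $ j" by simp
  qed
qed


lemma minv:
  fixes A :: "real^'n::finite^'n"
  assumes "invertible A"
  shows "A ** matrix_inv A = mat 1 \<and> matrix_inv A ** A = mat 1"
  using assms unfolding invertible_def matrix_inv_def by (rule someI_ex)

lemma right_inv_C:
  fixes T P C :: "real^'n::finite^'n"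
  assumes T: "invertible T" and P: "invertible P" and e: "P = T ** C ** transpose T"
  shows "C ** (transpose T ** matrix_inv P ** T) = mat 1"
proof -
  obtain Ti where Ti: "Ti ** T = mat 1" using T unfolding invertible_def by blast
  have Pi: "P ** matrix_inv P = mat 1" using minv[OF P] by blast
  have "C ** (transpose T ** matrix_inv P ** T) = (Ti ** T) ** C ** (transpose T ** matrix_inv P ** T)"
    by (simp add: Ti matrix_mul_lid)
  also have "\<dots> = Ti ** (T ** C ** transpose T) ** matrix_inv P ** T"
    by (simp add: matrix_mul_assoc)
  also have "\<dots> = Ti ** (P ** matrix_inv P) ** T" by (simp add: e[symmetric] matrix_mul_assoc)
  also have "\<dots> = Ti ** T" by (simp add: Pi matrix_mul_rid)
  finally show ?thesis using Ti by simp
qed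

theorem proposition3:
  fixes M :: "'a measure"
    and x y v w :: "'a \<Rightarrow> real^'n::finite"
    and T1 T2 P1 P2 :: "real^'n^'n"
  assumes "prob_space M"
    and "zm_nonsing_gaussian M x" and "zm_nonsing_gaussian M y"
    and "invertible T1" and "invertible T2"
    and "\<forall>\<omega>\<in>space M. T1 *v x \<omega> = v \<omega>"
    and "\<forall>\<omega>\<in>space M. T2 *v y \<omega> = w \<omega>"
    and "cov_mat M v = P1" and "cov_mat M w = P2"
    and "invertible P1" and "invertible P2"
    and "\<forall>\<omega>\<in>space M. x \<omega> = y \<omega>"
  shows "\<forall>\<omega>\<in>space M.
           (transpose T2 ** matrix_inv P2) *v w \<omega> = (transpose T1 ** matrix_inv P1) *v v \<omega>"
proof -
  define C where "C = (\<chi> k l. integral\<^sup>L M (\<lambda>\<omega>. x \<omega> $ k * x \<omega> $ l))"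
  have Cy: "(\<chi> k l. integral\<^sup>L M (\<lambda>\<omega>. y \<omega> $ k * y \<omega> $ l)) = C"
    unfolding C_def
    by (intro arg_cong[where f=vec_lambda] ext Bochner_Integration.integral_cong[OF refl]) (simp add: assms(12))
  have e1: "P1 = T1 ** C ** transpose T1"
    using cov_lin[OF assms(1,2,6)] assms(8) unfolding C_def by simp
  have e2: "P2 = T2 ** C ** transpose T2"
    using cov_lin[OF assms(1,3,7)] assms(9) Cy by simp
  define D1 where "D1 = transpose T1 ** matrix_inv P1 ** T1"
  define D2 where "D2 = transpose T2 ** matrix_inv P2 ** T2"
  have r1: "C ** D1 = mat 1" unfolding D1_def by (rule right_inv_C[OF assms(4,10) e1])
  have r2: "C ** D2 = mat 1" unfolding D2_def by (rule right_inv_C[OF assms(5,11) e2])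
  have l2: "D2 ** C = mat 1" using r2 matrix_left_right_inverse by blast
  have "D1 = (D2 ** C) ** D1" by (simp add: l2 matrix_mul_lid)
  also have "\<dots> = D2" by (metis matrix_mul_assoc r1 matrix_mul_rid)
  finally have D: "D1 = D2" .
  show ?thesis
  proof
    fix \<omega> assume o: "\<omega> \<in> space M"
    have "(transpose T2 ** matrix_inv P2) *v w \<omega> = D2 *v x \<omega>"
    proof -
      have "w \<omega> = T2 *v x \<omega>" using assms(7,12) o by simp
      then show ?thesis unfolding D2_def by (simp add: matrix_vector_mul_assoc)
    qed
    also have "\<dots> = (transpose T1 ** matrix_inv P1) *v v \<omega>"
    proof -
      have "v \<omega> = T1 *v x \<omega>" using assms(6) o by simp
      then show ?thesis unfolding D[symmetric] D1_def by (simp add: matrix_vector_mul_assoc)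
    qed
    finally show "(transpose T2 ** matrix_inv P2) *v w \<omega> = (transpose T1 ** matrix_inv P1) *v v \<omega>" .
  qed
qed

end
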